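(* Fix a TxnSP instance. Let $i$ and $j$ be subschedules formed by the same subset $S\subseteq J$, and suppose $i$ dominates $j$, i.e. $ms_i\le mt_j$. Let $S'\supseteq S$. Then for every subschedule $l$ formed by $S'$ and derived from $j$, there exists a subschedule $k$ formed by $S'$ and derived from $i$ with $ms_k\le ms_l$.
   Context: TxnSP instance: jobs $J=\{1,\dots,n\}$, identical machines $1,\dots,m$, lengths $L_\alpha>0$, symmetric binary conflict matrix $C$ with zero diagonal ($C_{\alpha\beta}=1$ iff $\alpha\neq\beta$ conflict). Insertion process: Start from some state, where each machine $\mu$ has a processing time $P_\mu$ (initially $0$ when empty). An instruction $(\alpha,\mu)$ appends a not-yet-placed job $\alpha$ at the end of machine $\mu$. It assigns $\alpha$ the start time $st(\alpha)$, defined as the least $t\ge P_\mu$ such that $[t,t+L_\alpha)$ is disjoint from $[st(\beta),ct(\beta))$ for every already placed job $\beta$ with $C_{\alpha\beta}=1$. It then sets the completion time $ct(\alpha)=st(\alpha)+L_\alpha$ and updates $P_\mu:=ct(\alpha)$. A subschedule formed by $S\subseteq J$ is the result (machine assignment, per-machine order, start and completion times) of applying, from the empty state, a list of instructions whose jobs are exactly the elements of $S$. Its size is $|S|$. A schedule is a subschedule formed by $J$. Its makespan $ms$ is $\max_\mu P_\mu$, and its minimum time $mt$ is $\min_\mu P_\mu$. A subschedule $j$ is derived from $i$ (and $i$ is a root of $j$) if there is an instruction list producing $i$ and a further list $\mathcal D$ (the derivation plan) such that applying $\mathcal D$ after it produces $j$. The residual subschedule $j-i$ is the result of applying $\mathcal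 D$ from the empty state. *)

theory Defs
  imports Main "HOL-Library.Library"
begin

text \<open>TxnSP instance: jobs 1..n, machines 1..m, lengths L, conflict relation C.\<close>

definition txnsp_instance :: "nat \<Rightarrow> nat \<Rightarrow> (nat \<Rightarrow> real) \<Rightarrow> (nat \<Rightarrow> nat \<Rightarrow> bool) \<Rightarrow> bool" where
  "txnsp_instance n m L C \<longleftrightarrow>
     1 \<le> m \<and> (\<forall>\<alpha>\<in>{1..n}. 0 < L \<alpha>) \<and> (\<forall>\<alpha> \<beta>. C \<alpha> \<beta> = C \<beta> \<alpha>) \<and> (\<forall>\<alpha>. \<not> C \<alpha> \<alpha>)"

text \<open>A state: per-machine job order, start times, per-machine processing time.\<close>
record sched =
  seq :: "nat \<Rightarrow> nat list"
  st  :: "nat \<Rightarrow> real"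
  P   :: "nat \<Rightarrow> real"

definition placed :: "sched \<Rightarrow> nat set" where
  "placed s = (\<Union>\<mu>. set (seq s \<mu>))"

definition ct :: "(nat \<Rightarrow> real) \<Rightarrow> sched \<Rightarrow> nat \<Rightarrow> real" where
  "ct L s \<beta> = st s \<beta> + L \<beta>"

definition empty_sched :: sched where
  "empty_sched = \<lparr>seq = (\<lambda>_. []), st = (\<lambda>_. 0), P = (\<lambda>_. 0)\<rparr>"

definition start_time :: "(nat \<Rightarrow> real) \<Rightarrow> (nat \<Rightarrow> nat \<Rightarrow> bool) \<Rightarrow> sched \<Rightarrow> nat \<Rightarrow> nat \<Rightarrow> real" where
  "start_time L C s \<alpha> \<mu> =
     (LEAST t. P s \<mu> \<le> t \<and>
        (\<forall>\<beta>\<in>placed s. C \<alpha> \<beta> \<longrightarrow> {t..<t + L \<alpha>} \<inter> {st s \<beta>..<ct L s \<beta>} = {}))"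

definition apply_instr :: "(nat \<Rightarrow> real) \<Rightarrow> (nat \<Rightarrow> nat \<Rightarrow> bool) \<Rightarrow> nat \<times> nat \<Rightarrow> sched \<Rightarrow> sched" where
  "apply_instr L C ins s =
     (let \<alpha> = fst ins; \<mu> = snd ins; t = start_time L C s \<alpha> \<mu> in
      s\<lparr>seq := (seq s)(\<mu> := seq s \<mu> @ [\<alpha>]), st := (st s)(\<alpha> := t), P := (P s)(\<mu> := t + L \<alpha>)\<rparr>)"

definition run :: "(nat \<Rightarrow> real) \<Rightarrow> (nat \<Rightarrow> nat \<Rightarrow> bool) \<Rightarrow> sched \<Rightarrow> (nat \<times> nat) list \<Rightarrow> sched" where
  "run L C s D = fold (apply_instr L C) D s"

fun valid_plan :: "nat \<Rightarrow> nat \<Rightarrow> (nat \<Rightarrow> real) \<Rightarrow> (nat \<Rightarrow> nat \<Rightarrow> bool) \<Rightarrow> sched \<Rightarrow> (nat \<times> nat) list \<Rightarrow> bool" where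
  "valid_plan n m L C s [] = True"
| "valid_plan n m L C s (ins # D) =
     (fst ins \<in> {1..n} \<and> snd ins \<in> {1..m} \<and> fst ins \<notin> placed s \<and>
      valid_plan n m L C (apply_instr L C ins s) D)"

definition subsched_formed_by :: "nat \<Rightarrow> nat \<Rightarrow> (nat \<Rightarrow> real) \<Rightarrow> (nat \<Rightarrow> nat \<Rightarrow> bool) \<Rightarrow> nat set \<Rightarrow> sched \<Rightarrow> bool" where
  "subsched_formed_by n m L C S x \<longleftrightarrow>
     (\<exists>D. valid_plan n m L C empty_sched D \<and> set (map fst D) = S \<and> run L C empty_sched D = x)"

definition derived_from :: "nat \<Rightarrow> nat \<Rightarrow> (nat \<Rightarrow> real) \<Rightarrow> (nat \<Rightarrow> nat \<Rightarrow> bool) \<Rightarrow> sched \<Rightarrow> sched \<Rightarrow> bool" where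
  "derived_from n m L C j i \<longleftrightarrow>
     (\<exists>D0 D. valid_plan n m L C empty_sched D0 \<and> run L C empty_sched D0 = i \<and>
             valid_plan n m L C i D \<and> run L C i D = j)"

definition ms :: "nat \<Rightarrow> sched \<Rightarrow> real" where
  "ms m s = Max (P s ` {1..m})"

definition mt :: "nat \<Rightarrow> sched \<Rightarrow> real" where
  "mt m s = Min (P s ` {1..m})"

end

theory Submission
  imports Defs
begin

lemma ivl_disj:
  fixes t a s b :: real
  assumes "0 < a" "0 < b"
  shows "({t..<t+a} \<inter> {s..<s+b} = {}) \<longleftrightarrow> (t + a \<le> s \<or> s + b \<le> t)"
proof
  assume h: "{t..<t+a} \<inter> {s..<s+b} = {}"
  show "t + a \<le> s \<or> s + b \<le> t"
  proof (rule ccontr)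
    assume "\<not> (t + a \<le> s \<or> s + b \<le> t)"
    then have "max t s \<in> {t..<t+a} \<inter> {s..<s+b}" using assms by auto
    then show False using h by blast
  qed
next
  assume "t + a \<le> s \<or> s + b \<le> t"
  then show "{t..<t+a} \<inter> {s..<s+b} = {}" by auto
qed

lemma placed_apply[simp]: "placed (apply_instr L C x s) = insert (fst x) (placed s)"
  unfolding placed_def apply_instr_def Let_def by (auto split: if_splits)

lemma st_apply[simp]: "st (apply_instr L C x s) = (st s)(fst x := start_time L C s (fst x) (snd x))"
  unfolding apply_instr_def Let_def by simp

lemma P_apply[simp]: "P (apply_instr L C x s) = (P s)(snd x := start_time L C s (fst x) (snd x) + L (fst x))"
  unfolding apply_instr_def Let_def by simp

lemma run_Nil[simp]: "run L C s [] = s" unfolding run_def by simp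
lemma run_snoc[simp]: "run L C s (xs @ [x]) = apply_instr L C x (run L C s xs)" unfolding run_def by simp
lemma run_append: "run L C s (xs @ ys) = run L C (run L C s xs) ys" unfolding run_def by simp

lemma placed_run: "placed (run L C s xs) = placed s \<union> fst ` set xs"
  by (induction xs rule: rev_induct) auto

lemma placed_empty[simp]: "placed empty_sched = {}"
  unfolding placed_def empty_sched_def by simp

lemma valid_append: "valid_plan n m L C s (xs @ ys) = (valid_plan n m L C s xs \<and> valid_plan n m L C (run L C s xs) ys)"
  by (induction xs arbitrary: s) (auto simp: run_def)

lemma valid_char: "valid_plan n m L C s xs \<longleftrightarrow>
   (\<forall>x\<in>set xs. fst x \<in> {1..n} \<and> snd x \<in> {1..m}) \<and> distinct (map fst xs) \<and> fst ` set xs \<inter> placed s = {}"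
  by (induction xs arbitrary: s) auto

lemma st_least:
  fixes L :: "nat \<Rightarrow> real" and C and \<alpha> \<mu> :: nat and s :: sched
  assumes fin: "finite (placed s)"
  defines "F \<equiv> (\<lambda>t. P s \<mu> \<le> t \<and> (\<forall>\<beta>\<in>placed s. C \<alpha> \<beta> \<longrightarrow> {t..<t + L \<alpha>} \<inter> {st s \<beta>..<ct L s \<beta>} = {}))"
  shows "F (start_time L C s \<alpha> \<mu>) \<and> (\<forall>y. F y \<longrightarrow> start_time L C s \<alpha> \<mu> \<le> y)"
proof -
  define K where "K = insert (P s \<mu>) (ct L s ` placed s)"
  have finK: "finite K" using fin K_def by simp
  have key: "F (Max {c\<in>K. c \<le> y}) \<and> Max {c\<in>K. c \<le> y} \<le> y" if Fy: "F y" for y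
  proof -
    let ?c = "Max {c\<in>K. c \<le> y}"
    have ne: "P s \<mu> \<in> {c\<in>K. c \<le> y}" using Fy unfolding F_def K_def by auto
    have fc: "finite {c\<in>K. c \<le> y}" using finK by simp
    have cle: "?c \<le> y" using Max_in[OF fc] ne by blast
    have Pc: "P s \<mu> \<le> ?c" using Max_ge[OF fc ne] .
    have "\<forall>\<beta>\<in>placed s. C \<alpha> \<beta> \<longrightarrow> {?c..<?c + L \<alpha>} \<inter> {st s \<beta>..<ct L s \<beta>} = {}"
    proof (intro ballI impI)
      fix \<beta> assume b: "\<beta> \<in> placed s" "C \<alpha> \<beta>"
      show "{?c..<?c + L \<alpha>} \<inter> {st s \<beta>..<ct L s \<beta>} = {}"
      proof (cases "ct L s \<beta> \<le> y")
        case True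
        then have "ct L s \<beta> \<in> {c\<in>K. c \<le> y}" using b K_def by auto
        then have "ct L s \<beta> \<le> ?c" using Max_ge[OF fc] by blast
        then show ?thesis by auto
      next
        case False
        have dy: "{y..<y + L \<alpha>} \<inter> {st s \<beta>..<ct L s \<beta>} = {}" using Fy b unfolding F_def by blast
        show ?thesis
        proof (rule ccontr)
          assume "{?c..<?c + L \<alpha>} \<inter> {st s \<beta>..<ct L s \<beta>} \<noteq> {}"
          then obtain z where "z \<in> {?c..<?c + L \<alpha>} \<inter> {st s \<beta>..<ct L s \<beta>}" by blast
          then have z: "?c \<le> z" "z < ?c + L \<alpha>" "st s \<beta> \<le> z" "z < ct L s \<beta>" by auto
          show False
          proof (cases "y \<le> z")
            case True
            then have "z \<in> {y..<y + L \<alpha>} \<inter> {st s \<beta>..<ct L s \<beta>}" using z cle by auto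
            then show False using dy by blast
          next
            case f2: False
            then have "y \<in> {y..<y + L \<alpha>} \<inter> {st s \<beta>..<ct L s \<beta>}" using z cle False by auto
            then show False using dy by blast
          qed
        qed
      qed
    qed
    then show ?thesis using Pc cle unfolding F_def by blast
  qed
  define c0 where "c0 = Max K"
  have Fc0: "F c0"
  proof -
    have "P s \<mu> \<le> c0" using finK c0_def K_def by simp
    moreover have "\<forall>\<beta>\<in>placed s. ct L s \<beta> \<le> c0" using finK c0_def K_def by simp
    ultimately show ?thesis unfolding F_def by fastforce
  qed
  have fG: "finite {c\<in>K. F c}" using finK by simp
  have "c0 \<in> K" using Max_in[OF finK] c0_def K_def by blast
  then have neG: "c0 \<in> {c\<in>K. F c}" using Fc0 by simp
  define x where "x = Min {c\<in>K. F c}"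
  have Fx: "F x" using Min_in[OF fG] neG x_def by blast
  have minx: "\<forall>y. F y \<longrightarrow> x \<le> y"
  proof (intro allI impI)
    fix y assume Fy: "F y"
    have kk: "F (Max {c\<in>K. c \<le> y}) \<and> Max {c\<in>K. c \<le> y} \<le> y" using key[OF Fy] .
    have ne: "P s \<mu> \<in> {c\<in>K. c \<le> y}" using Fy unfolding F_def K_def by auto
    have "Max {c\<in>K. c \<le> y} \<in> K" using Max_in[of "{c\<in>K. c \<le> y}"] finK ne by auto
    then have "x \<le> Max {c\<in>K. c \<le> y}" using Min_le[OF fG] kk x_def by blast
    then show "x \<le> y" using kk by linarith
  qed
  have "start_time L C s \<alpha> \<mu> = x"
    unfolding start_time_def F_def[symmetric]
    by (rule Least_equality) (use Fx minx in auto)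
  then show ?thesis using Fx minx by simp
qed

lemma run_props:
  assumes inst: "txnsp_instance n m L C" and fin: "finite (placed s0)"
    and vp: "valid_plan n m L C s0 xs"
  shows "(\<forall>\<gamma>\<in>placed s0. st (run L C s0 xs) \<gamma> = st s0 \<gamma>) \<and>
         (\<forall>\<mu>. P s0 \<mu> \<le> P (run L C s0 xs) \<mu>) \<and>
         (\<forall>x\<in>set xs. ct L (run L C s0 xs) (fst x) \<le> P (run L C s0 xs) (snd x)) \<and>
         (\<forall>x\<in>set xs. P s0 (snd x) \<le> st (run L C s0 xs) (fst x)) \<and>
         (\<forall>a\<in>set xs. \<forall>b\<in>set xs. fst a \<noteq> fst b \<and> (snd a = snd b \<or> C (fst a) (fst b)) \<longrightarrow>
             ct L (run L C s0 xs) (fst a) \<le> st (run L C s0 xs) (fst b) \<or>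
             ct L (run L C s0 xs) (fst b) \<le> st (run L C s0 xs) (fst a))"
  using vp
proof (induction xs rule: rev_induct)
  case Nil
  then show ?case by simp
next
  case (snoc x xs)
  obtain \<alpha> \<mu> where x: "x = (\<alpha>, \<mu>)" by (cases x)
  define s where "s = run L C s0 xs"
  define t where "t = start_time L C s \<alpha> \<mu>"
  have vx: "valid_plan n m L C s0 xs" "\<alpha> \<in> {1..n}" "\<mu> \<in> {1..m}" "\<alpha> \<notin> placed s"
    using snoc.prems by (auto simp: valid_append x s_def)
  have IH: "(\<forall>\<gamma>\<in>placed s0. st s \<gamma> = st s0 \<gamma>) \<and>
         (\<forall>\<mu>. P s0 \<mu> \<le> P s \<mu>) \<and>
         (\<forall>x\<in>set xs. ct L s (fst x) \<le> P s (snd x)) \<and>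
         (\<forall>x\<in>set xs. P s0 (snd x) \<le> st s (fst x)) \<and>
         (\<forall>a\<in>set xs. \<forall>b\<in>set xs. fst a \<noteq> fst b \<and> (snd a = snd b \<or> C (fst a) (fst b)) \<longrightarrow>
             ct L s (fst a) \<le> st s (fst b) \<or> ct L s (fst b) \<le> st s (fst a))"
    using snoc.IH vx(1) s_def by simp
  have ps: "placed s = placed s0 \<union> fst ` set xs" using placed_run s_def by simp
  have fins: "finite (placed s)" using ps fin by simp
  have Lpos: "0 < L \<alpha>" using inst vx unfolding txnsp_instance_def by auto
  have Lposx: "\<forall>y\<in>set xs. 0 < L (fst y)" using vx(1) inst unfolding valid_char txnsp_instance_def by auto
  have sym: "\<And>a b. C a b = C b a" using inst unfolding txnsp_instance_def by auto
  have SL: "P s \<mu> \<le> t" and SC: "\<forall>\<beta>\<in>placed s. C \<alpha> \<beta> \<longrightarrow> {t..<t + L \<alpha>} \<inter> {st s \<beta>..<ct L s \<beta>} = {}"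
    using st_least[OF fins, where \<mu>=\<mu> and \<alpha>=\<alpha> and C=C and L=L] t_def by auto
  have notin: "\<alpha> \<notin> placed s0" "\<forall>y\<in>set xs. fst y \<noteq> \<alpha>" using vx(4) ps by auto
  define s' where "s' = apply_instr L C x s"
  have st': "st s' = (st s)(\<alpha> := t)" and P': "P s' = (P s)(\<mu> := t + L \<alpha>)"
    using s'_def x t_def by auto
  have ctx: "\<forall>y\<in>set xs. (snd y = \<mu> \<or> C \<alpha> (fst y)) \<longrightarrow> ct L s (fst y) \<le> t \<or> t + L \<alpha> \<le> st s (fst y)"
  proof (intro ballI impI)
    fix y assume y: "y \<in> set xs" "snd y = \<mu> \<or> C \<alpha> (fst y)"
    show "ct L s (fst y) \<le> t \<or> t + L \<alpha> \<le> st s (fst y)"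
    proof (cases "snd y = \<mu>")
      case True
      then show ?thesis using IH y SL by force
    next
      case False
      then have c: "C \<alpha> (fst y)" using y by simp
      have "fst y \<in> placed s" using y ps by auto
      then have "{t..<t + L \<alpha>} \<inter> {st s (fst y)..<st s (fst y) + L (fst y)} = {}"
        using SC c unfolding ct_def by blast
      then show ?thesis using ivl_disj[OF Lpos, of "L (fst y)" t "st s (fst y)"] Lposx y
        unfolding ct_def by auto
    qed
  qed
  have run': "run L C s0 (xs @ [x]) = s'" using s'_def s_def by simp
  have PsP: "\<forall>\<nu>. P s \<nu> \<le> P s' \<nu>" using P' SL Lpos by auto
  show ?case unfolding run'
  proof (intro conjI)
    show "\<forall>\<gamma>\<in>placed s0. st s' \<gamma> = st s0 \<gamma>" using IH st' notin by auto
    show "\<forall>\<nu>. P s0 \<nu> \<le> P s' \<nu>" using IH PsP by (meson order_trans)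
    show "\<forall>y\<in>set (xs @ [x]). ct L s' (fst y) \<le> P s' (snd y)"
    proof
      fix y assume "y \<in> set (xs @ [x])"
      then consider "y = x" | "y \<in> set xs" by auto
      then show "ct L s' (fst y) \<le> P s' (snd y)"
      proof cases
        case 1 then show ?thesis using st' P' x by (simp add: ct_def)
      next
        case 2
        then have "fst y \<noteq> \<alpha>" using notin by auto
        then have "ct L s' (fst y) = ct L s (fst y)" using st' by (simp add: ct_def)
        then show ?thesis using IH 2 PsP by (metis order_trans)
      qed
    qed
    show "\<forall>y\<in>set (xs @ [x]). P s0 (snd y) \<le> st s' (fst y)"
    proof
      fix y assume "y \<in> set (xs @ [x])"
      then consider "y = x" | "y \<in> set xs" by auto
      then show "P s0 (snd y) \<le> st s' (fst y)"
      proof cases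
        case 1 then show ?thesis using st' x IH SL by (metis fun_upd_same order_trans prod.sel)
      next
        case 2
        then have "fst y \<noteq> \<alpha>" using notin by auto
        then show ?thesis using IH 2 st' by simp
      qed
    qed
    show "\<forall>a\<in>set (xs @ [x]). \<forall>b\<in>set (xs @ [x]). fst a \<noteq> fst b \<and> (snd a = snd b \<or> C (fst a) (fst b)) \<longrightarrow>
             ct L s' (fst a) \<le> st s' (fst b) \<or> ct L s' (fst b) \<le> st s' (fst a)"
    proof (intro ballI impI)
      fix a b assume a: "a \<in> set (xs @ [x])" and b: "b \<in> set (xs @ [x])"
        and h: "fst a \<noteq> fst b \<and> (snd a = snd b \<or> C (fst a) (fst b))"
      have ctr: "\<And>y. y \<in> set xs \<Longrightarrow> ct L s' (fst y) = ct L s (fst y) \<and> st s' (fst y) = st s (fst y)"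
        using notin st' by (auto simp: ct_def)
      have ctx': "ct L s' \<alpha> = t + L \<alpha>" "st s' \<alpha> = t" using st' by (auto simp: ct_def)
      show "ct L s' (fst a) \<le> st s' (fst b) \<or> ct L s' (fst b) \<le> st s' (fst a)"
      proof (cases "a = x")
        case True
        then have "b \<in> set xs" using h b by auto
        then show ?thesis using ctx ctr[of b] ctx' h True x sym by auto
      next
        case False
        then have aa: "a \<in> set xs" using a by auto
        show ?thesis
        proof (cases "b = x")
          case True
          then show ?thesis using ctx ctr[of a] ctx' h aa x sym by auto
        next
          case False
          then have "b \<in> set xs" using b by auto
          then show ?thesis using IH aa h ctr[of a] ctr[of b] by auto
        qed
      qed
    qed
  qed
qed

lemma k_props:
  assumes inst: "txnsp_instance n m L C" and fin: "finite (placed i)"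
    and Ti: "\<forall>\<gamma>\<in>placed i. ct L i \<gamma> \<le> T"
    and sub: "set ys \<subseteq> set Dl" and so: "List.sorted (map (\<lambda>x. st l (fst x)) ys)"
    and vp: "valid_plan n m L C i ys"
    and L1: "\<forall>x\<in>set Dl. T \<le> st l (fst x)"
    and Lpair: "\<forall>a\<in>set Dl. \<forall>b\<in>set Dl. fst a \<noteq> fst b \<and> (snd a = snd b \<or> C (fst a) (fst b)) \<longrightarrow>
             ct L l (fst a) \<le> st l (fst b) \<or> ct L l (fst b) \<le> st l (fst a)"
    and Pi: "\<forall>\<mu>\<in>{1..m}. P i \<mu> \<le> T"
  shows "(\<forall>\<gamma>\<in>placed i. st (run L C i ys) \<gamma> = st i \<gamma>) \<and>
         (\<forall>x\<in>set ys. st (run L C i ys) (fst x) \<le> st l (fst x)) \<and>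
         (\<forall>\<mu>\<in>{1..m}. P (run L C i ys) \<mu> \<le> T \<or>
             (\<exists>x\<in>set ys. snd x = \<mu> \<and> P (run L C i ys) \<mu> \<le> ct L l (fst x)))"
  using sub so vp
proof (induction ys rule: rev_induct)
  case Nil
  then show ?case using Pi by simp
next
  case (snoc x xs)
  obtain \<alpha> \<mu> where x: "x = (\<alpha>, \<mu>)" by (cases x)
  define s where "s = run L C i xs"
  define t where "t = start_time L C s \<alpha> \<mu>"
  have vx: "valid_plan n m L C i xs" "\<alpha> \<in> {1..n}" "\<mu> \<in> {1..m}" "\<alpha> \<notin> placed s"
    using snoc.prems by (auto simp: valid_append x s_def)
  have sox: "List.sorted (map (\<lambda>x. st l (fst x)) xs)" "\<forall>y\<in>set xs. st l (fst y) \<le> st l \<alpha>"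
    using snoc.prems(2) by (auto simp: sorted_append x)
  have subx: "set xs \<subseteq> set Dl" "x \<in> set Dl" using snoc.prems(1) by auto
  have IH: "(\<forall>\<gamma>\<in>placed i. st s \<gamma> = st i \<gamma>) \<and>
         (\<forall>x\<in>set xs. st s (fst x) \<le> st l (fst x)) \<and>
         (\<forall>\<mu>\<in>{1..m}. P s \<mu> \<le> T \<or> (\<exists>x\<in>set xs. snd x = \<mu> \<and> P s \<mu> \<le> ct L l (fst x)))"
    using snoc.IH[OF subx(1) sox(1) vx(1)] s_def by simp
  have ps: "placed s = placed i \<union> fst ` set xs" using placed_run s_def by simp
  have fins: "finite (placed s)" using ps fin by simp
  have Lpos: "0 < L \<alpha>" using inst vx unfolding txnsp_instance_def by auto
  have sym: "\<And>a b. C a b = C b a" using inst unfolding txnsp_instance_def by auto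
  have notin: "\<alpha> \<notin> placed i" "\<forall>y\<in>set xs. fst y \<noteq> \<alpha>" using vx(4) ps by auto
  have Tl: "T \<le> st l \<alpha>" using L1 subx x by auto
  have before: "ct L l (fst y) \<le> st l \<alpha>" if y: "y \<in> set xs" "snd y = \<mu> \<or> C (fst y) \<alpha>" for y
  proof -
    have "fst y \<noteq> \<alpha>" using notin y by auto
    then have "ct L l (fst y) \<le> st l \<alpha> \<or> ct L l \<alpha> \<le> st l (fst y)"
      using Lpair subx y x by fastforce
    moreover have "st l (fst y) \<le> st l \<alpha>" using sox y by auto
    ultimately show ?thesis using Lpos unfolding ct_def by auto
  qed
  have F1: "P s \<mu> \<le> st l \<alpha>"
  proof -
    have "P s \<mu> \<le> T \<or> (\<exists>x\<in>set xs. snd x = \<mu> \<and> P s \<mu> \<le> ct L l (fst x))" using IH vx(3) by blast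
    then show ?thesis
    proof
      assume "P s \<mu> \<le> T" then show ?thesis using Tl by linarith
    next
      assume "\<exists>x\<in>set xs. snd x = \<mu> \<and> P s \<mu> \<le> ct L l (fst x)"
      then obtain y where "y \<in> set xs" "snd y = \<mu>" "P s \<mu> \<le> ct L l (fst y)" by blast
      then show ?thesis using before[of y] by linarith
    qed
  qed
  have F2: "\<forall>\<beta>\<in>placed s. C \<alpha> \<beta> \<longrightarrow> {st l \<alpha>..<st l \<alpha> + L \<alpha>} \<inter> {st s \<beta>..<ct L s \<beta>} = {}"
  proof (intro ballI impI)
    fix \<beta> assume b: "\<beta> \<in> placed s" "C \<alpha> \<beta>"
    have "ct L s \<beta> \<le> st l \<alpha>"
    proof (cases "\<beta> \<in> placed i")
      case True
      then have "ct L s \<beta> = ct L i \<beta>" using IH by (simp add: ct_def)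
      then show ?thesis using Ti True Tl by force
    next
      case False
      then obtain y where y: "y \<in> set xs" "\<beta> = fst y" using b ps by auto
      have "ct L s \<beta> \<le> ct L l \<beta>" using IH y by (force simp: ct_def)
      moreover have "ct L l (fst y) \<le> st l \<alpha>" using before y b sym by blast
      ultimately show ?thesis using y by simp
    qed
    then show "{st l \<alpha>..<st l \<alpha> + L \<alpha>} \<inter> {st s \<beta>..<ct L s \<beta>} = {}" by auto
  qed
  have tle: "t \<le> st l \<alpha>"
    using st_least[OF fins, where \<mu>=\<mu> and \<alpha>=\<alpha> and C=C and L=L] F1 F2 t_def by blast
  define s' where "s' = apply_instr L C x s"
  have st': "st s' = (st s)(\<alpha> := t)" and P': "P s' = (P s)(\<mu> := t + L \<alpha>)"
    using s'_def x t_def by auto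
  have run': "run L C i (xs @ [x]) = s'" using s'_def s_def by simp
  show ?case unfolding run'
  proof (intro conjI)
    show "\<forall>\<gamma>\<in>placed i. st s' \<gamma> = st i \<gamma>" using IH st' notin by auto
    show "\<forall>y\<in>set (xs @ [x]). st s' (fst y) \<le> st l (fst y)"
      using IH st' notin tle x by auto
    show "\<forall>\<nu>\<in>{1..m}. P s' \<nu> \<le> T \<or> (\<exists>y\<in>set (xs @ [x]). snd y = \<nu> \<and> P s' \<nu> \<le> ct L l (fst y))"
    proof
      fix \<nu> assume nu: "\<nu> \<in> {1..m}"
      show "P s' \<nu> \<le> T \<or> (\<exists>y\<in>set (xs @ [x]). snd y = \<nu> \<and> P s' \<nu> \<le> ct L l (fst y))"
      proof (cases "\<nu> = \<mu>")
        case True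
        then have "P s' \<nu> \<le> ct L l (fst x)" using P' tle x by (simp add: ct_def)
        then show ?thesis using True x by auto
      next
        case False
        then have "P s' \<nu> = P s \<nu>" using P' by simp
        then show ?thesis using IH nu by auto
      qed
    qed
  qed
qed

theorem theorem4:
  fixes n m :: nat and L :: "nat \<Rightarrow> real" and C :: "nat \<Rightarrow> nat \<Rightarrow> bool"
    and S S' :: "nat set" and i j l :: sched
  assumes "txnsp_instance n m L C"
    and "subsched_formed_by n m L C S i"
    and "subsched_formed_by n m L C S j"
    and "ms m i \<le> mt m j"
    and "S \<subseteq> S'"
    and "subsched_formed_by n m L C S' l"
    and "derived_from n m L C l j"
  shows "\<exists>k. subsched_formed_by n m L C S' k \<and> derived_from n m L C k i \<and> ms m k \<le> ms m l"
proof -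
  note inst = assms(1)
  obtain Di where Di: "valid_plan n m L C empty_sched Di" "set (map fst Di) = S" "run L C empty_sched Di = i"
    using assms(2) unfolding subsched_formed_by_def by blast
  obtain Dj where Dj: "set (map fst Dj) = S" "run L C empty_sched Dj = j"
    using assms(3) unfolding subsched_formed_by_def by blast
  obtain Dl' where Dl': "set (map fst Dl') = S'" "run L C empty_sched Dl' = l"
    using assms(6) unfolding subsched_formed_by_def by blast
  obtain D0 Dl where D: "valid_plan n m L C empty_sched D0" "run L C empty_sched D0 = j"
     "valid_plan n m L C j Dl" "run L C j Dl = l"
    using assms(7) unfolding derived_from_def by blast
  have pi: "placed i = S" using Di placed_run[of L C empty_sched Di] by simp
  have pj: "placed j = S" using Dj placed_run[of L C empty_sched Dj] by simp
  have pl: "placed l = S'" using Dl' placed_run[of L C empty_sched Dl'] by simp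
  have finS: "finite S" using Di(2) by (metis List.finite_set)
  have pl2: "S' = S \<union> fst ` set Dl" using pl D(4) placed_run[of L C j Dl] pj by simp
  have m1: "1 \<le> m" using inst unfolding txnsp_instance_def by simp
  define T where "T = ms m i"
  have fM: "finite {1..m}" "{1..m} \<noteq> {}" using m1 by auto
  have Pi: "\<forall>\<mu>\<in>{1..m}. P i \<mu> \<le> T" unfolding T_def ms_def using fM by auto
  have Pj: "\<forall>\<mu>\<in>{1..m}. T \<le> P j \<mu>"
  proof
    fix \<mu> assume "\<mu> \<in> {1..m}"
    then have "mt m j \<le> P j \<mu>" unfolding mt_def using fM by auto
    then show "T \<le> P j \<mu>" using assms(4) T_def by linarith
  qed
  have Ri: "\<forall>x\<in>set Di. ct L i (fst x) \<le> P i (snd x)"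
    using run_props[OF inst _ Di(1)] Di(3) by simp
  have Ti: "\<forall>\<gamma>\<in>placed i. ct L i \<gamma> \<le> T"
  proof
    fix \<gamma> assume "\<gamma> \<in> placed i"
    then have "\<gamma> \<in> fst ` set Di" using pi Di(2) by simp
    then obtain x where x: "x \<in> set Di" "fst x = \<gamma>" by blast
    have "snd x \<in> {1..m}" using Di(1) x unfolding valid_char by blast
    then show "ct L i \<gamma> \<le> T" using Ri x Pi by force
  qed
  have Rl: "(\<forall>\<mu>. P j \<mu> \<le> P l \<mu>) \<and>
         (\<forall>x\<in>set Dl. ct L l (fst x) \<le> P l (snd x)) \<and>
         (\<forall>x\<in>set Dl. P j (snd x) \<le> st l (fst x)) \<and>
         (\<forall>a\<in>set Dl. \<forall>b\<in>set Dl. fst a \<noteq> fst b \<and> (snd a = snd b \<or> C (fst a) (fst b)) \<longrightarrow>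
             ct L l (fst a) \<le> st l (fst b) \<or> ct L l (fst b) \<le> st l (fst a))"
    using run_props[OF inst _ D(3)] D(4) pj finS by simp
  have vDl: "\<forall>x\<in>set Dl. fst x \<in> {1..n} \<and> snd x \<in> {1..m}" "distinct (map fst Dl)"
    "fst ` set Dl \<inter> S = {}" using D(3) pj unfolding valid_char by auto
  have L1: "\<forall>x\<in>set Dl. T \<le> st l (fst x)"
  proof
    fix x assume x: "x \<in> set Dl"
    then show "T \<le> st l (fst x)" using vDl(1) Pj Rl by (meson order_trans)
  qed
  define E where "E = sort_key (\<lambda>x. st l (fst x)) Dl"
  have setE: "set E = set Dl" unfolding E_def by simp
  have msE: "mset (map fst E) = mset (map fst Dl)" unfolding E_def by simp
  have distE: "distinct (map fst E)" using msE vDl(2) by (metis distinct_count_atmost_1 count_mset set_mset_mset mset_eq_setD)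
  have soE: "List.sorted (map (\<lambda>x. st l (fst x)) E)" unfolding E_def
    by (metis sorted_sort_key)
  have vE: "valid_plan n m L C i E" unfolding valid_char using setE distE vDl pi by auto
  define k where "k = run L C i E"
  have K: "(\<forall>\<gamma>\<in>placed i. st k \<gamma> = st i \<gamma>) \<and>
         (\<forall>x\<in>set E. st k (fst x) \<le> st l (fst x)) \<and>
         (\<forall>\<mu>\<in>{1..m}. P k \<mu> \<le> T \<or> (\<exists>x\<in>set E. snd x = \<mu> \<and> P k \<mu> \<le> ct L l (fst x)))"
    unfolding k_def
    by (rule k_props[OF inst _ Ti _ soE vE L1 _ Pi]) (use finS pi setE Rl in auto)
  have fk: "subsched_formed_by n m L C S' k"
    unfolding subsched_formed_by_def
    by (rule exI[of _ "Di @ E"]) (use Di vE setE pl2 k_def in \<open>auto simp: valid_append run_append\<close>)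
  have dk: "derived_from n m L C k i"
    unfolding derived_from_def using Di vE k_def by blast
  have "ms m k \<le> ms m l"
    unfolding ms_def
  proof (rule Max.boundedI)
    show "finite (P k ` {1..m})" by simp
    show "P k ` {1..m} \<noteq> {}" using fM by simp
    fix a assume "a \<in> P k ` {1..m}"
    then obtain \<mu> where mu: "\<mu> \<in> {1..m}" "a = P k \<mu>" by auto
    have "P k \<mu> \<le> P l \<mu>"
    proof -
      have "P k \<mu> \<le> T \<or> (\<exists>x\<in>set E. snd x = \<mu> \<and> P k \<mu> \<le> ct L l (fst x))" using K mu by blast
      then show ?thesis
      proof
        assume "P k \<mu> \<le> T" then show ?thesis using Pj Rl mu by (meson order_trans)
      next
        assume "\<exists>x\<in>set E. snd x = \<mu> \<and> P k \<mu> \<le> ct L l (fst x)"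
        then obtain x where "x \<in> set Dl" "snd x = \<mu>" "P k \<mu> \<le> ct L l (fst x)" using setE by blast
        then show ?thesis using Rl by force
      qed
    qed
    also have "P l \<mu> \<le> Max (P l ` {1..m})" using mu by simp
    finally show "a \<le> Max (P l ` {1..m})" using mu by simp
  qed
  then show ?thesis using fk dk by blast
qed

end
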